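(* Let $n\ge3$ and let $f$ be a $\gamma_{tr3}(P_3\square P_n)$-function such that the number of vertices $v$ with $f(v)=\emptyset$ is minimum among all $\gamma_{tr3}(P_3\square P_n)$-functions. Then $|f((i,j))|\le2$ for all $i\in\{0,1\}$ and $j\in\{0,1,\dots,n-1\}$.
   Context: $P_m$ denotes the directed path with vertex set $\{0,1,\dots,m-1\}$ and arcs $(i,i+1)$ for $0\le i\le m-2$. The Cartesian product $D_1\square D_2$ has vertex set $V(D_1)\times V(D_2)$, with an arc from $(x_1,y_1)$ to $(x_2,y_2)$ iff either $(x_1,x_2)$ is an arc of $D_1$ and $y_1=y_2$, or $x_1=x_2$ and $(y_1,y_2)$ is an arc of $D_2$. For a digraph $D$ and positive integer $k$, a $k$-rainbow dominating function on $D$ is $f:V(D)\to\mathcal P(\{1,\dots,k\})$ such that every $v$ with $f(v)=\emptyset$ satisfies $\bigcup_{u\in N^-(v)}f(u)=\{1,\dots,k\}$, where $N^-(v)$ is the set of in-neighbors of $v$; its weight is $\sum_v|f(v)|$. It is total if additionally the subdigraph induced by $\{v:f(v)\ne\emptyset\}$ has no isolated vertex (a vertex with neither in- nor out-neighbors in it). $\gamma_{trk}(D)$ is the minimum weight of a total $k$-rainbow dominating function, and a $\gamma_{trk}(D)$-function is one attaining it. *)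

theory Defs
  imports Main
begin

type_synonym 'a digraph = "'a set \<times> ('a \<times> 'a) set"

definition verts :: "'a digraph \<Rightarrow> 'a set" where "verts D = fst D"
definition arcs :: "'a digraph \<Rightarrow> ('a \<times> 'a) set" where "arcs D = snd D"

definition path_digraph :: "nat \<Rightarrow> nat digraph" where
  "path_digraph m = ({0..<m}, {(i, i + 1) | i. i + 1 < m})"

definition cart_prod :: "'a digraph \<Rightarrow> 'b digraph \<Rightarrow> ('a \<times> 'b) digraph" where
  "cart_prod D1 D2 = (verts D1 \<times> verts D2,
     {((x1, y1), (x2, y2)) | x1 y1 x2 y2.
        x1 \<in> verts D1 \<and> x2 \<in> verts D1 \<and> y1 \<in> verts D2 \<and> y2 \<in> verts D2 \<and>
        (((x1, x2) \<in> arcs D1 \<and> y1 = y2) \<or> (x1 = x2 \<and> (y1, y2) \<in> arcs D2))})"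

definition in_nbrs :: "'a digraph \<Rightarrow> 'a \<Rightarrow> 'a set" where
  "in_nbrs D v = {u \<in> verts D. (u, v) \<in> arcs D}"

definition rainbow_dom :: "'a digraph \<Rightarrow> nat \<Rightarrow> ('a \<Rightarrow> nat set) \<Rightarrow> bool" where
  "rainbow_dom D k f \<longleftrightarrow>
     (\<forall>v \<in> verts D. f v \<subseteq> {1..k}) \<and>
     (\<forall>v \<in> verts D. f v = {} \<longrightarrow> (\<Union>u \<in> in_nbrs D v. f u) = {1..k})"

definition total_rainbow_dom :: "'a digraph \<Rightarrow> nat \<Rightarrow> ('a \<Rightarrow> nat set) \<Rightarrow> bool" where
  "total_rainbow_dom D k f \<longleftrightarrow> rainbow_dom D k f \<and>
     (\<forall>v \<in> verts D. f v \<noteq> {} \<longrightarrow>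
        (\<exists>u \<in> verts D. f u \<noteq> {} \<and> ((u, v) \<in> arcs D \<or> (v, u) \<in> arcs D)))"

definition rd_weight :: "'a digraph \<Rightarrow> ('a \<Rightarrow> nat set) \<Rightarrow> nat" where
  "rd_weight D f = (\<Sum>v \<in> verts D. card (f v))"

definition gamma_trk :: "'a digraph \<Rightarrow> nat \<Rightarrow> nat" where
  "gamma_trk D k = Inf {rd_weight D f | f. total_rainbow_dom D k f}"

definition gamma_trk_function :: "'a digraph \<Rightarrow> nat \<Rightarrow> ('a \<Rightarrow> nat set) \<Rightarrow> bool" where
  "gamma_trk_function D k f \<longleftrightarrow> total_rainbow_dom D k f \<and> rd_weight D f = gamma_trk D k"

definition empty_count :: "'a digraph \<Rightarrow> ('a \<Rightarrow> nat set) \<Rightarrow> nat" where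
  "empty_count D f = card {v \<in> verts D. f v = {}}"

end

theory Submission
  imports Defs
begin

lemma key:
  assumes fin: "finite (verts D)"
    and gf: "gamma_trk_function D 3 f"
    and minc: "\<forall>g. gamma_trk_function D 3 g \<longrightarrow> empty_count D f \<le> empty_count D g"
    and v: "v \<in> verts D" and c3: "card (f v) \<ge> 3"
    and Oc: "card {w \<in> verts D. (v,w) \<in> arcs D \<and> f w = {}} \<le> 2"
  shows False
proof -
  define Ow where "Ow = {w \<in> verts D. (v,w) \<in> arcs D \<and> f w = {}}"
  define g where "g = (\<lambda>u. if u = v then {1::nat} else if u \<in> Ow then {2} else f u)"
  have tf: "total_rainbow_dom D 3 f" and wf: "rd_weight D f = gamma_trk D 3"
    using gf by (auto simp: gamma_trk_function_def)
  have fsub: "\<forall>u\<in>verts D. f u \<subseteq> {1..3}" using tf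
    by (auto simp: total_rainbow_dom_def rainbow_dom_def)
  have fcov: "\<forall>u\<in>verts D. f u = {} \<longrightarrow> (\<Union>w \<in> in_nbrs D u. f w) = {1..3}" using tf
    by (auto simp: total_rainbow_dom_def rainbow_dom_def)
  have ftot: "\<forall>u\<in>verts D. f u \<noteq> {} \<longrightarrow>
        (\<exists>w \<in> verts D. f w \<noteq> {} \<and> ((w, u) \<in> arcs D \<or> (u, w) \<in> arcs D))"
    using tf by (auto simp: total_rainbow_dom_def)
  have fvne: "f v \<noteq> {}" using c3 by auto
  have vOw: "v \<notin> Ow" using fvne by (auto simp: Ow_def)
  have gne: "\<And>u. f u \<noteq> {} \<Longrightarrow> g u \<noteq> {}" by (auto simp: g_def)
  have gsup: "\<And>u. u \<noteq> v \<Longrightarrow> f u \<subseteq> g u" by (auto simp: g_def Ow_def)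
  have gsub: "\<And>u. u \<in> verts D \<Longrightarrow> g u \<subseteq> {1..3}"
  proof -
    fix u assume "u \<in> verts D"
    then have "f u \<subseteq> {1..3}" using fsub by blast
    then show "g u \<subseteq> {1..3}" unfolding g_def by simp
  qed
  have tg: "total_rainbow_dom D 3 g"
    unfolding total_rainbow_dom_def rainbow_dom_def
  proof (intro conjI ballI impI)
    fix u assume "u \<in> verts D" then show "g u \<subseteq> {1..3}" by (rule gsub)
  next
    fix u assume u: "u \<in> verts D" and gu: "g u = {}"
    have uv: "u \<noteq> v" and uOw: "u \<notin> Ow" and fu: "f u = {}" using gu by (auto simp: g_def split: if_splits)
    have "v \<notin> in_nbrs D u" using uOw u fu by (auto simp: Ow_def in_nbrs_def)
    have fw: "\<And>w. w \<in> in_nbrs D u \<Longrightarrow> f w \<subseteq> g w"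
    proof -
      fix w assume "w \<in> in_nbrs D u"
      then have "w \<noteq> v" using \<open>v \<notin> in_nbrs D u\<close> by metis
      then show "f w \<subseteq> g w" by (rule gsup)
    qed
    have s1: "(\<Union>w \<in> in_nbrs D u. f w) \<subseteq> (\<Union>w \<in> in_nbrs D u. g w)"
      by (rule UN_mono) (simp_all add: fw)
    have s2: "(\<Union>w \<in> in_nbrs D u. g w) \<subseteq> {1..3}"
      by (rule UN_least) (rule gsub, simp add: in_nbrs_def)
    have s3: "(\<Union>w \<in> in_nbrs D u. f w) = {1..3}" using fcov u fu by blast
    show "(\<Union>w \<in> in_nbrs D u. g w) = {1..3}" using s1 s2 s3 by (rule_tac subset_antisym) simp_all
  next
    fix u assume u: "u \<in> verts D" and gu: "g u \<noteq> {}"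
    show "\<exists>w \<in> verts D. g w \<noteq> {} \<and> ((w, u) \<in> arcs D \<or> (u, w) \<in> arcs D)"
    proof (cases "f u = {}")
      case True
      then have "u \<in> Ow \<or> u = v" using gu by (auto simp: g_def split: if_splits)
      then have "u \<in> Ow" using True fvne by auto
      then show ?thesis using v by (auto simp: Ow_def g_def)
    next
      case False
      then obtain w where "w \<in> verts D" "f w \<noteq> {}" "(w, u) \<in> arcs D \<or> (u, w) \<in> arcs D"
        using ftot u by blast
      then show ?thesis using gne by blast
    qed
  qed
  have Owsub: "Ow \<subseteq> verts D" by (auto simp: Ow_def)
  have finOw: "finite Ow" using fin Owsub finite_subset by blast
  have pt: "\<And>u. card (g u) + (if u = v then card (f v) else 0)
      = card (f u) + (if u = v then 1 else 0) + (if u \<in> Ow then 1 else 0)"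
    using vOw by (auto simp: g_def Ow_def)
  have "(\<Sum>u\<in>verts D. card (g u) + (if u = v then card (f v) else 0))
      = (\<Sum>u\<in>verts D. card (f u) + (if u = v then 1 else 0) + (if u \<in> Ow then 1 else 0))"
    using pt by simp
  hence "rd_weight D g + card (f v) = rd_weight D f + 1 + (\<Sum>u\<in>verts D. (if u \<in> Ow then 1 else 0))"
    using v fin by (simp add: rd_weight_def sum.distrib)
  moreover have "(\<Sum>u\<in>verts D. (if u \<in> Ow then 1 else 0::nat)) = card Ow"
  proof -
    have "Ow \<inter> verts D = Ow" "verts D \<inter> Ow = Ow" using Owsub by blast+
    then show ?thesis using fin by (simp add: sum.If_cases)
  qed
  ultimately have W: "rd_weight D g + card (f v) = rd_weight D f + 1 + card Ow" by simp
  have "gamma_trk D 3 \<le> rd_weight D g"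
    unfolding gamma_trk_def Inf_nat_def using tg by (auto intro: Least_le)
  hence "rd_weight D f \<le> rd_weight D g" using wf by simp
  hence Ow2: "card Ow = 2" using W c3 Oc unfolding Ow_def[symmetric] by linarith
  hence "rd_weight D g = gamma_trk D 3" using W c3 wf \<open>rd_weight D f \<le> rd_weight D g\<close> by linarith
  hence "gamma_trk_function D 3 g" using tg by (simp add: gamma_trk_function_def)
  hence le: "empty_count D f \<le> empty_count D g" using minc by blast
  define E where "E = {u \<in> verts D. f u = {}}"
  have OwE: "Ow \<subseteq> E" by (auto simp: Ow_def E_def)
  have "{u \<in> verts D. g u = {}} = E - Ow" using vOw fvne by (auto simp: g_def E_def)
  hence "empty_count D g = card E - card Ow"
    using OwE finOw by (simp add: empty_count_def card_Diff_subset)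
  moreover have "card Ow \<le> card E" using OwE fin by (simp add: E_def card_mono)
  moreover have "empty_count D f = card E" by (simp add: empty_count_def E_def)
  ultimately show False using le Ow2 by linarith
qed

theorem lemma4p8:
  fixes n :: nat and f :: "nat \<times> nat \<Rightarrow> nat set"
  defines "D \<equiv> cart_prod (path_digraph 3) (path_digraph n)"
  assumes "n \<ge> 3"
    and "gamma_trk_function D 3 f"
    and "\<forall>g. gamma_trk_function D 3 g \<longrightarrow> empty_count D f \<le> empty_count D g"
  shows "\<forall>i \<in> {0, 1}. \<forall>j \<in> {0..<n}. card (f (i, j)) \<le> 2"
proof (intro ballI, rule ccontr)
  fix i j assume i: "i \<in> {0::nat, 1}" and j: "j \<in> {0..<n}" and c: "\<not> card (f (i, j)) \<le> 2"
  have VD: "verts D = {0..<3} \<times> {0..<n}"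
    by (simp add: D_def cart_prod_def verts_def path_digraph_def)
  have AD: "\<And>w. ((i,j), w) \<in> arcs D \<Longrightarrow> w \<in> {(i+1,j), (i,j+1)}"
    by (auto simp: D_def cart_prod_def verts_def arcs_def path_digraph_def)
  have "{w \<in> verts D. ((i,j),w) \<in> arcs D \<and> f w = {}} \<subseteq> {(i+1,j), (i,j+1)}"
    using AD by blast
  hence "card {w \<in> verts D. ((i,j),w) \<in> arcs D \<and> f w = {}} \<le> card {(i+1,j), (i,j+1)}"
    by (rule card_mono[rotated]) simp
  also have "\<dots> \<le> 2" by (simp add: card_insert_le_m1)
  finally have Oc: "card {w \<in> verts D. ((i,j),w) \<in> arcs D \<and> f w = {}} \<le> 2" .
  show False
  proof (rule key[OF _ assms(3) assms(4) _ _ Oc])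
    show "finite (verts D)" using VD by simp
    show "(i,j) \<in> verts D" using VD i j by auto
    show "card (f (i,j)) \<ge> 3" using c by simp
  qed
qed

end
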